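(* Fix an integer $q\ge 2$. There is a constant $C>0$ depending only on $q$ such that for every $\varepsilon\in(0,1/C)$ there exists $n_0$ with the following property. Let $n\ge n_0$, let $t$ be a positive integer with $t\le 10\sqrt{n}$, and let $S\subseteq[q]^n$ satisfy $\Delta(G[S])\le n^5$. Let \[ S_1 = \left\{ v\in S : \deg_k(v) \le \varepsilon n^{\lceil k/2\rceil/2} \text{ for each }k=1,\dots,20\right\}. \] Then $|S_1|\le (1 + C\varepsilon)H_q(n,t)$.
   Context: $d$ is the Hamming distance on $[q]^n$. $V_q(n,r) = \sum_{i=0}^{r}\binom{n}{i}(q-1)^i$ and $H_q(n,t) = q^n / V_q(n,t)$. $G = G_{q,n,t}$ is the graph with vertex set $[q]^n$ in which two distinct vertices are adjacent iff their Hamming distance is at most $2t$; $G[S]$ is its induced subgraph on $S$ and $\Delta(\cdot)$ is the maximum degree. For $v\in S$ and $k\ge1$, $\deg_k(v)=|\{u\in S : d(u,v)=k\}|$. *)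

theory Defs
  imports "HOL-Analysis.Analysis"
begin

definition words :: "nat \<Rightarrow> nat \<Rightarrow> nat list set" where
  "words q n = {v. length v = n \<and> (\<forall>i<n. v ! i < q)}"

definition hamming :: "nat list \<Rightarrow> nat list \<Rightarrow> nat" where
  "hamming u v = card {i. i < length u \<and> u ! i \<noteq> v ! i}"

definition Vq :: "nat \<Rightarrow> nat \<Rightarrow> nat \<Rightarrow> nat" where
  "Vq q n r = (\<Sum>i=0..r. (n choose i) * (q - 1) ^ i)"

definition Hq :: "nat \<Rightarrow> nat \<Rightarrow> nat \<Rightarrow> real" where
  "Hq q n t = real (q ^ n) / real (Vq q n t)"

text \<open>Degree of v in G_{q,n,t}[S]: distinct vertices adjacent iff Hamming distance \<le> 2t.\<close>
definition Gdeg :: "nat \<Rightarrow> nat list set \<Rightarrow> nat list \<Rightarrow> nat" where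
  "Gdeg t S v = card {u \<in> S. u \<noteq> v \<and> hamming u v \<le> 2 * t}"

definition maxdeg :: "nat \<Rightarrow> nat list set \<Rightarrow> nat" where
  "maxdeg t S = (if S = {} then 0 else Max (Gdeg t S ` S))"

definition degk :: "nat list set \<Rightarrow> nat \<Rightarrow> nat list \<Rightarrow> nat" where
  "degk S k v = card {u \<in> S. hamming u v = k}"

end

theory Submission
  imports Defs "HOL-Library.FuncSet"
begin


definition hball :: "nat \<Rightarrow> nat \<Rightarrow> nat list \<Rightarrow> nat \<Rightarrow> nat list set" where
  "hball q n v r = {x \<in> words q n. hamming x v \<le> r}"

lemma finite_words: "finite (words q n)"
proof -
  have "words q n \<subseteq> {xs. set xs \<subseteq> {..<q} \<and> length xs = n}"
    by (auto simp: words_def in_set_conv_nth)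
  moreover have "finite {xs. set xs \<subseteq> {..<q} \<and> length xs = n}"
    by (rule finite_lists_length_eq) simp
  ultimately show ?thesis by (rule finite_subset)
qed

lemma sphere_card:
  assumes u: "u \<in> words q n"
  shows "card {y \<in> words q n. hamming y u = i} = (n choose i) * (q-1)^i"
proof -
  define A where "A = {P. P \<subseteq> {..<n} \<and> card P = i}"
  define B where "B = (\<lambda>P. PiE P (\<lambda>j. {..<q} - {u!j}))"
  define F where "F = (\<lambda>(P::nat set,f::nat\<Rightarrow>nat). map (\<lambda>j. if j\<in>P then f j else u!j) [0..<n])"
  define G where "G = (\<lambda>y::nat list. ({j. j<n \<and> y!j \<noteq> u!j}, restrict (\<lambda>j. y!j) {j. j<n \<and> y!j \<noteq> u!j}))"
  have ulen: "length u = n" and ult: "\<And>j. j<n \<Longrightarrow> u!j < q" using u by (auto simp: words_def)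
  have bij: "bij_betw F (Sigma A B) {y \<in> words q n. hamming y u = i}"
  proof (rule bij_betw_byWitness[where f'=G])
    show "\<forall>a\<in>Sigma A B. G (F a) = a"
    proof
      fix a assume a: "a \<in> Sigma A B"
      obtain P f where af: "a = (P,f)" by fastforce
      have P: "P \<subseteq> {..<n}" and f: "f \<in> B P" using a af by (auto simp: A_def)
      have fne: "\<And>j. j\<in>P \<Longrightarrow> f j \<noteq> u!j" using f by (auto simp: B_def PiE_def Pi_def)
      have e: "{j. j<n \<and> F (P,f)!j \<noteq> u!j} = P" using P fne by (auto simp: F_def split: if_splits)
      have "restrict (\<lambda>j. F (P,f)!j) P = f"
        using f P by (auto simp: B_def F_def PiE_def extensional_def restrict_def fun_eq_iff)
      then show "G (F a) = a" using e af by (simp add: G_def)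
    qed
    show "\<forall>a\<in>{y \<in> words q n. hamming y u = i}. F (G a) = a"
    proof
      fix y assume y: "y \<in> {y \<in> words q n. hamming y u = i}"
      then have "length y = n" by (auto simp: words_def)
      then show "F (G y) = y" by (intro nth_equalityI) (auto simp: F_def G_def)
    qed
    show "F ` Sigma A B \<subseteq> {y \<in> words q n. hamming y u = i}"
    proof
      fix y assume "y \<in> F ` Sigma A B"
      then obtain P f where Pf: "(P,f) \<in> Sigma A B" "y = F (P,f)" by auto
      have P: "P \<subseteq> {..<n}" "card P = i" and f: "f \<in> B P" using Pf by (auto simp: A_def)
      have fne: "\<And>j. j\<in>P \<Longrightarrow> f j \<noteq> u!j \<and> f j < q" using f by (auto simp: B_def PiE_def Pi_def)
      have e: "{j. j<n \<and> y!j \<noteq> u!j} = P" using P fne Pf(2) by (auto simp: F_def split: if_splits)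
      have "y \<in> words q n" using Pf(2) fne ult by (auto simp: F_def words_def)
      moreover have "hamming y u = i" using e P Pf(2) by (simp add: hamming_def F_def)
      ultimately show "y \<in> {y \<in> words q n. hamming y u = i}" by simp
    qed
    show "G ` {y \<in> words q n. hamming y u = i} \<subseteq> Sigma A B"
    proof
      fix z assume "z \<in> G ` {y \<in> words q n. hamming y u = i}"
      then obtain y where y: "y \<in> words q n" "hamming y u = i" "z = G y" by auto
      have ly: "length y = n" using y by (auto simp: words_def)
      have "card {j. j<n \<and> y!j \<noteq> u!j} = i" using y(2) ly by (simp add: hamming_def)
      then show "z \<in> Sigma A B" using y ly
        by (auto simp: G_def A_def B_def words_def)
    qed
  qed
  have "card (Sigma A B) = (\<Sum>P\<in>A. card (B P))"
    by (rule card_SigmaI) (auto simp: A_def B_def finite_subset intro!: finite_PiE)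
  also have "\<dots> = (\<Sum>P\<in>A. (q-1)^i)"
  proof (rule sum.cong[OF refl])
    fix P assume P: "P \<in> A"
    then have fP: "finite P" by (auto simp: A_def finite_subset)
    have "card (B P) = (\<Prod>j\<in>P. card ({..<q} - {u!j}))" unfolding B_def by (rule card_PiE[OF fP])
    also have "\<dots> = (\<Prod>j\<in>P. q - 1)"
      using P ult by (intro prod.cong) (auto simp: A_def)
    also have "\<dots> = (q-1)^i" using P by (simp add: A_def)
    finally show "card (B P) = (q-1)^i" .
  qed
  also have "\<dots> = (n choose i) * (q-1)^i"
    using n_subsets[of "{..<n}" i] by (simp add: A_def)
  finally show ?thesis using bij_betw_same_card[OF bij] by simp
qed

lemma ball_card:
  assumes u: "u \<in> words q n"
  shows "card (hball q n u r) = Vq q n r"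
proof -
  have e: "hball q n u r = (\<Union>i\<in>{0..r}. {y \<in> words q n. hamming y u = i})"
    by (auto simp: hball_def)
  have "card (\<Union>i\<in>{0..r}. {y \<in> words q n. hamming y u = i}) = (\<Sum>i\<in>{0..r}. card {y \<in> words q n. hamming y u = i})"
    by (rule card_UN_disjoint) (auto intro: finite_subset[OF _ finite_words])
  also have "\<dots> = Vq q n r" using sphere_card[OF u] by (simp add: Vq_def)
  finally show ?thesis using e by simp
qed

lemma hamming_sym: "length u = length v \<Longrightarrow> hamming u v = hamming v u"
  unfolding hamming_def by (metis (no_types, lifting))

lemma hamming_0: "length u = length v \<Longrightarrow> hamming u v = 0 \<Longrightarrow> u = v"
  unfolding hamming_def by (auto intro!: nth_equalityI)

lemma term_ratio:
  fixes q n t i :: nat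
  assumes q: "q \<ge> 2" and tn: "2*t \<le> n" and it: "i < t"
  shows "n * ((n choose i) * (q-1)^i) \<le> 2*t * ((n choose Suc i) * (q-1)^Suc i)"
proof -
  have key: "Suc i * (n choose Suc i) = (n - i) * (n choose i)"
  proof (cases n)
    case 0 then show ?thesis by simp
  next
    case (Suc m)
    have "Suc i * (n choose Suc i) = n * (m choose i)" using Suc_times_binomial[of i m] Suc by simp
    also have "\<dots> = (n - i) * (n choose i)" using binomial_absorb_comp[of n i] Suc by simp
    finally show ?thesis .
  qed
  have "n \<le> 2 * (n-i)" using tn it by linarith
  then have "n * (n choose i) \<le> (2 * (n-i)) * (n choose i)" by (rule mult_right_mono) simp
  also have "\<dots> = 2 * ((n-i) * (n choose i))" by simp
  also have "\<dots> = 2 * (Suc i * (n choose Suc i))" using key by simp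
  also have "\<dots> = (2 * Suc i) * (n choose Suc i)" by simp
  also have "\<dots> \<le> (2*t) * (n choose Suc i)" using it by (intro mult_right_mono) auto
  finally have a: "n * (n choose i) \<le> 2*t * (n choose Suc i)" .
  have b: "(q-1)^i \<le> (q-1)^Suc i" using q by simp
  have "n * ((n choose i) * (q-1)^i) = (n * (n choose i)) * (q-1)^i" by simp
  also have "\<dots> \<le> (2*t * (n choose Suc i)) * (q-1)^i" using a by (rule mult_right_mono) simp
  also have "\<dots> \<le> (2*t * (n choose Suc i)) * (q-1)^Suc i" using b by (rule mult_left_mono) simp
  finally show ?thesis by simp
qed

lemma Vq_step:
  fixes q n t r :: nat
  assumes q: "q \<ge> 2" and tn: "2*t \<le> n" and r: "1 \<le> r" "r \<le> t"
  shows "n * Vq q n (r - 1) \<le> 2*t * Vq q n r"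
proof -
  have "n * Vq q n (r-1) = (\<Sum>i\<in>{0..r-1}. n * ((n choose i) * (q-1)^i))"
    by (simp add: Vq_def sum_distrib_left)
  also have "\<dots> \<le> (\<Sum>i\<in>{0..r-1}. 2*t * ((n choose Suc i) * (q-1)^Suc i))"
    using r by (intro sum_mono term_ratio[OF q tn]) auto
  also have "\<dots> = 2*t * (\<Sum>i\<in>{0..r-1}. (n choose Suc i) * (q-1)^Suc i)"
    by (simp add: sum_distrib_left)
  also have "(\<Sum>i\<in>{0..r-1}. (n choose Suc i) * (q-1)^Suc i) = (\<Sum>i\<in>{1..r}. (n choose i) * (q-1)^i)"
    using r by (intro sum.reindex_bij_witness[where i="\<lambda>i. i - 1" and j=Suc]) auto
  also have "\<dots> \<le> Vq q n r" unfolding Vq_def by (intro sum_mono2) auto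
  finally show ?thesis by simp
qed

lemma Vq_ratio:
  fixes q n t s :: nat
  assumes q: "q \<ge> 2" and tn: "2*t \<le> n" and n: "n > 0" and s: "s \<le> t"
  shows "real (Vq q n (t - s)) \<le> (2*t/n)^s * Vq q n t"
  using s
proof (induction s)
  case 0 then show ?case by simp
next
  case (Suc s)
  have "real n * Vq q n (t - Suc s) \<le> 2*t * Vq q n (t - s)"
    using Vq_step[OF q tn, of "t - s"] Suc.prems
    by (metis Suc_diff_Suc diff_Suc_1 diff_le_self le_add1 less_eq_Suc_le plus_1_eq_Suc of_nat_le_iff of_nat_mult of_nat_numeral)
  then have "real (Vq q n (t - Suc s)) \<le> (2*t/n) * Vq q n (t - s)"
    using n by (simp add: field_simps)
  also have "\<dots> \<le> (2*t/n) * ((2*t/n)^s * Vq q n t)"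
    using Suc by (intro mult_left_mono) auto
  finally show ?case by (simp add: mult.assoc)
qed

lemma inter_card:
  assumes u: "u \<in> words q n" and v: "v \<in> words q n"
  shows "card (hball q n u t \<inter> hball q n v t) \<le> q ^ hamming u v * card {y \<in> words q n. 2*hamming y u + hamming u v \<le> 2*t}"
proof -
  define D where "D = {i. i < n \<and> u!i \<noteq> v!i}"
  have lu: "length u = n" and lv: "length v = n" using u v by (auto simp: words_def)
  have dD: "hamming u v = card D" by (simp add: hamming_def D_def lu)
  have fD: "finite D" by (simp add: D_def)
  define phi where "phi = (\<lambda>x::nat list. map (\<lambda>i. if i \<in> D then u!i else x!i) [0..<n])"
  define g where "g = (\<lambda>x::nat list. (phi x, restrict (\<lambda>i. x!i) D))"
  let ?T = "{y \<in> words q n. 2*hamming y u + hamming u v \<le> 2*t}"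
  have inj: "inj_on g (hball q n u t \<inter> hball q n v t)"
  proof (rule inj_onI)
    fix x y assume x: "x \<in> hball q n u t \<inter> hball q n v t" and y: "y \<in> hball q n u t \<inter> hball q n v t" and e: "g x = g y"
    have lx: "length x = n" and ly: "length y = n" using x y by (auto simp: hball_def words_def)
    show "x = y"
    proof (rule nth_equalityI)
      show "length x = length y" using lx ly by simp
      fix i assume i: "i < length x"
      show "x!i = y!i"
      proof (cases "i \<in> D")
        case True
        have "restrict (\<lambda>i. x!i) D i = restrict (\<lambda>i. y!i) D i" using e by (simp add: g_def)
        then show ?thesis using True by simp
      next
        case False
        have "phi x ! i = phi y ! i" using e by (simp add: g_def)
        then show ?thesis using False i lx by (simp add: phi_def)
      qed
    qed
  qed
  have img: "g ` (hball q n u t \<inter> hball q n v t) \<subseteq> ?T \<times> PiE D (\<lambda>_. {..<q})"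
  proof
    fix z assume "z \<in> g ` (hball q n u t \<inter> hball q n v t)"
    then obtain x where x: "x \<in> hball q n u t" "x \<in> hball q n v t" and z: "z = g x" by auto
    have xw: "x \<in> words q n" and lx: "length x = n" and xq: "\<And>i. i<n \<Longrightarrow> x!i < q"
      using x by (auto simp: hball_def words_def)
    have uq: "\<And>i. i<n \<Longrightarrow> u!i < q" using u by (auto simp: words_def)
    define P where "P = {i. i < n \<and> x!i \<noteq> u!i}"
    define Q where "Q = {i. i < n \<and> x!i \<noteq> v!i}"
    define J where "J = P - D"
    have cP: "card P \<le> t" using x lx by (simp add: hball_def hamming_def P_def)
    have cQ: "card Q \<le> t" using x lx by (simp add: hball_def hamming_def Q_def)
    have fin: "finite P" "finite Q" "finite J" by (auto simp: P_def Q_def J_def)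
    have QJ: "Q - D = J" by (auto simp: P_def Q_def J_def D_def)
    have "card P = card J + card (P \<inter> D)"
    proof -
      have "P = J \<union> (P \<inter> D)" "J \<inter> (P \<inter> D) = {}" by (auto simp: J_def)
      then show ?thesis using fin card_Un_disjoint[of J "P \<inter> D"] by simp
    qed
    moreover have "card Q = card J + card (Q \<inter> D)"
    proof -
      have "Q = J \<union> (Q \<inter> D)" "J \<inter> (Q \<inter> D) = {}" using QJ by auto
      then show ?thesis using fin card_Un_disjoint[of J "Q \<inter> D"] by (metis finite_Int)
    qed
    moreover have "card D \<le> card (P \<inter> D) + card (Q \<inter> D)"
    proof -
      have "D \<subseteq> (P \<inter> D) \<union> (Q \<inter> D)" by (auto simp: D_def P_def Q_def)
      then have "card D \<le> card ((P \<inter> D) \<union> (Q \<inter> D))" by (rule card_mono[rotated]) (use fin in auto)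
      also have "\<dots> \<le> card (P \<inter> D) + card (Q \<inter> D)" by (rule card_Un_le)
      finally show ?thesis .
    qed
    ultimately have key: "2 * card J + card D \<le> 2 * t" using cP cQ by linarith
    have "{i. i < length (phi x) \<and> phi x ! i \<noteq> u ! i} = J"
      by (auto simp: phi_def J_def P_def split: if_splits)
    then have "hamming (phi x) u = card J" by (simp add: hamming_def)
    moreover have "phi x \<in> words q n" using xq uq by (auto simp: phi_def words_def)
    ultimately have "phi x \<in> ?T" using key dD by simp
    moreover have "restrict (\<lambda>i. x!i) D \<in> PiE D (\<lambda>_. {..<q})" using xq by (auto simp: D_def)
    ultimately show "z \<in> ?T \<times> PiE D (\<lambda>_. {..<q})" using z by (simp add: g_def)
  qed
  have fT: "finite ?T" using finite_words by (rule finite_subset[rotated]) auto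
  have "card (hball q n u t \<inter> hball q n v t) \<le> card (?T \<times> PiE D (\<lambda>_. {..<q}))"
    by (rule card_inj_on_le[OF inj img]) (use fT fD in \<open>auto intro!: finite_PiE\<close>)
  also have "\<dots> = card ?T * q ^ card D" by (simp add: card_cartesian_product card_PiE[OF fD])
  finally show ?thesis using dD by (simp add: mult.commute)
qed

lemma card_words: "card (words q n) \<le> q ^ n"
proof -
  have "words q n \<subseteq> {xs. set xs \<subseteq> {..<q} \<and> length xs = n}"
    by (auto simp: words_def in_set_conv_nth)
  then have "card (words q n) \<le> card {xs. set xs \<subseteq> {..<q} \<and> length xs = n}"
    by (rule card_mono[rotated]) (rule finite_lists_length_eq, simp)
  also have "\<dots> = q ^ n" by (simp add: card_lists_length_eq)
  finally show ?thesis .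
qed

lemma inter_bound:
  assumes q: "q \<ge> 2" and tn: "2*t \<le> n" and n: "n > 0"
    and u: "u \<in> words q n" and v: "v \<in> words q n"
  shows "real (card (hball q n u t \<inter> hball q n v t)) \<le>
    (if hamming u v \<le> 2*t then real q ^ hamming u v * (2*t/n)^((hamming u v + 1) div 2) * Vq q n t else 0)"
proof -
  let ?d = "hamming u v"
  let ?s = "(hamming u v + 1) div 2"
  let ?T = "{y \<in> words q n. 2*hamming y u + hamming u v \<le> 2*t}"
  have ic: "card (hball q n u t \<inter> hball q n v t) \<le> q ^ ?d * card ?T" by (rule inter_card[OF u v])
  show ?thesis
  proof (cases "?d \<le> 2*t")
    case False
    then have "?T = {}" by auto
    then show ?thesis using ic False by simp
  next
    case True
    have "?T = hball q n u (t - ?s)" unfolding hball_def using True by (intro Collect_cong) arith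
    then have cT: "card ?T = Vq q n (t - ?s)" using ball_card[OF u] by simp
    have "real (card (hball q n u t \<inter> hball q n v t)) \<le> real q ^ ?d * real (Vq q n (t - ?s))"
      using ic cT by (metis of_nat_le_iff of_nat_mult of_nat_power)
    also have "\<dots> \<le> real q ^ ?d * ((2*t/n)^?s * Vq q n t)"
      using True by (intro mult_left_mono Vq_ratio[OF q tn n]) auto
    finally show ?thesis using True by (simp add: mult.assoc)
  qed
qed

lemma double_count:
  assumes S1: "S1 \<subseteq> words q n"
  shows "real (card S1) * Vq q n t \<le> real q ^ n +
    (\<Sum>v\<in>S1. \<Sum>u\<in>S1-{v}. real (card (hball q n v t \<inter> hball q n u t)))"
proof -
  let ?W = "words q n"
  have fS: "finite S1" using S1 finite_words finite_subset by blast
  define ind where "ind = (\<lambda>x v. if x \<in> hball q n v t then 1 else (0::real))"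
  define m where "m = (\<lambda>x. \<Sum>v\<in>S1. ind x v)"
  have cnt: "\<And>A. A \<subseteq> ?W \<Longrightarrow> (\<Sum>x\<in>?W. if x \<in> A then 1 else (0::real)) = real (card A)"
  proof -
    fix A assume "A \<subseteq> ?W"
    then have "?W \<inter> {x. x \<in> A} = A" by auto
    then show "(\<Sum>x\<in>?W. if x \<in> A then 1 else (0::real)) = real (card A)"
      by (simp add: sum.If_cases[OF finite_words])
  qed
  have bW: "\<And>v. hball q n v t \<subseteq> ?W" by (auto simp: hball_def)
  have s1: "(\<Sum>x\<in>?W. m x) = real (card S1) * Vq q n t"
  proof -
    have "(\<Sum>x\<in>?W. m x) = (\<Sum>v\<in>S1. \<Sum>x\<in>?W. ind x v)" unfolding m_def by (rule sum.swap)
    also have "\<dots> = (\<Sum>v\<in>S1. real (Vq q n t))"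
    proof (rule sum.cong[OF refl])
      fix v assume "v \<in> S1"
      then have "v \<in> ?W" using S1 by auto
      then show "(\<Sum>x\<in>?W. ind x v) = real (Vq q n t)"
        using cnt[OF bW] ball_card by (simp add: ind_def)
    qed
    finally show ?thesis by simp
  qed
  have s2: "(\<Sum>x\<in>?W. m x ^ 2) = (\<Sum>v\<in>S1. \<Sum>u\<in>S1. real (card (hball q n v t \<inter> hball q n u t)))"
  proof -
    have "(\<Sum>x\<in>?W. m x ^ 2) = (\<Sum>x\<in>?W. \<Sum>v\<in>S1. \<Sum>u\<in>S1. ind x v * ind x u)"
      by (simp add: m_def power2_eq_square sum_product)
    also have "\<dots> = (\<Sum>v\<in>S1. \<Sum>x\<in>?W. \<Sum>u\<in>S1. ind x v * ind x u)" by (rule sum.swap)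
    also have "\<dots> = (\<Sum>v\<in>S1. \<Sum>u\<in>S1. \<Sum>x\<in>?W. ind x v * ind x u)" by (simp add: sum.swap[of _ ?W])
    also have "\<dots> = (\<Sum>v\<in>S1. \<Sum>u\<in>S1. real (card (hball q n v t \<inter> hball q n u t)))"
    proof (intro sum.cong refl)
      fix v u
      have "(\<Sum>x\<in>?W. ind x v * ind x u) = (\<Sum>x\<in>?W. if x \<in> hball q n v t \<inter> hball q n u t then 1 else 0)"
        by (rule sum.cong) (auto simp: ind_def)
      moreover have "hball q n v t \<inter> hball q n u t \<subseteq> ?W" using bW by blast
      ultimately show "(\<Sum>x\<in>?W. ind x v * ind x u) = real (card (hball q n v t \<inter> hball q n u t))"
        using cnt[of "hball q n v t \<inter> hball q n u t"] by presburger
    qed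
    finally show ?thesis .
  qed
  have s3: "(\<Sum>v\<in>S1. \<Sum>u\<in>S1. real (card (hball q n v t \<inter> hball q n u t)))
      = real (card S1) * Vq q n t + (\<Sum>v\<in>S1. \<Sum>u\<in>S1-{v}. real (card (hball q n v t \<inter> hball q n u t)))"
  proof -
    have "(\<Sum>v\<in>S1. \<Sum>u\<in>S1. real (card (hball q n v t \<inter> hball q n u t)))
        = (\<Sum>v\<in>S1. real (Vq q n t) + (\<Sum>u\<in>S1-{v}. real (card (hball q n v t \<inter> hball q n u t))))"
    proof (rule sum.cong[OF refl])
      fix v assume v: "v \<in> S1"
      then have "v \<in> ?W" using S1 by auto
      then show "(\<Sum>u\<in>S1. real (card (hball q n v t \<inter> hball q n u t))) = real (Vq q n t) + (\<Sum>u\<in>S1-{v}. real (card (hball q n v t \<inter> hball q n u t)))"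
        using sum.remove[OF fS v, of "\<lambda>u. real (card (hball q n v t \<inter> hball q n u t))"] ball_card by simp
    qed
    then show ?thesis by (simp add: sum.distrib)
  qed
  have pt: "\<And>x. 2 * m x \<le> 1 + m x ^ 2"
  proof -
    fix x have "0 \<le> (m x - 1)^2" by simp
    then show "2 * m x \<le> 1 + m x ^ 2" by (simp add: power2_eq_square algebra_simps)
  qed
  have "2 * (\<Sum>x\<in>?W. m x) \<le> (\<Sum>x\<in>?W. 1 + m x ^ 2)"
    unfolding sum_distrib_left by (rule sum_mono) (rule pt)
  also have "\<dots> = real (card ?W) + (\<Sum>x\<in>?W. m x ^ 2)" by (simp add: sum.distrib)
  also have "real (card ?W) \<le> real q ^ n" using card_words by (metis of_nat_le_iff of_nat_power)
  finally show ?thesis using s1 s2 s3 by linarith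
qed



lemma ceil_half: "nat \<lceil>real k / 2\<rceil> = (k + 1) div 2"
proof -
  obtain m where "k = 2*m \<or> k = 2*m+1" by (metis oddE evenE)
  then show ?thesis
  proof
    assume k: "k = 2*m"
    then have "real k / 2 = real m" by simp
    then show ?thesis using k by simp
  next
    assume k: "k = 2*m+1"
    have "\<lceil>real k / 2\<rceil> = int m + 1" unfolding ceiling_eq_iff using k by simp
    then show ?thesis using k by simp
  qed
qed

lemma powr_half: "real n > 0 \<Longrightarrow> real n powr (real s / 2) = sqrt (real n) ^ s"
proof -
  assume n: "real n > 0"
  have "real n powr (real s / 2) = (real n powr (1/2)) powr real s"
    by (simp add: powr_powr)
  also have "\<dots> = sqrt (real n) powr real s" using n by (simp add: powr_half_sqrt)
  also have "\<dots> = sqrt (real n) ^ s" using n by (simp add: powr_realpow)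
  finally show ?thesis .
qed

lemma per_v:
  fixes q n t :: nat and \<epsilon> :: real
  assumes q: "q \<ge> 2" and n: "n > 0" and tn: "2*t \<le> n" and t10: "real t \<le> 10 * sqrt (real n)"
    and S: "S \<subseteq> words q n" and v: "v \<in> S" and eps: "\<epsilon> > 0"
    and hdeg: "\<forall>k\<in>{1..20}. real (degk S k v) \<le> \<epsilon> * real n powr (real (nat \<lceil>real k / 2\<rceil>) / 2)"
    and hmax: "real (maxdeg t S) \<le> real n ^ 5"
    and cq: "20 * real q ^ 2 \<le> sqrt (real n)"
    and big: "real n ^ 5 * (20 * real q ^ 2 / sqrt (real n)) ^ 11 \<le> \<epsilon>"
  shows "(\<Sum>u\<in>S-{v}. real (card (hball q n v t \<inter> hball q n u t))) \<le> (20 * real q ^ 20 * 20 ^ 20 + 1) * \<epsilon> * Vq q n t"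
proof -
  define V where "V = real (Vq q n t)"
  define f where "f = (\<lambda>d::nat. if d \<le> 2*t then real q ^ d * ((2 * real t / real n))^((d + 1) div 2) * V else 0)"
  define I where "I = (\<lambda>u. real (card (hball q n v t \<inter> hball q n u t)))"
  define c where "c = 20 * real q ^ 2 / sqrt (real n)"
  have fS: "finite S" using S finite_words finite_subset by blast
  have vw: "v \<in> words q n" using S v by auto
  have V0: "V \<ge> 0" by (simp add: V_def)
  have sn: "sqrt (real n) > 0" using n by simp
  have r20: "(2 * real t / real n) * sqrt (real n) \<le> 20"
  proof -
    have "(2 * real t / real n) * sqrt (real n) = 2*t / sqrt (real n)"
      using sn by (simp add: field_simps)
    also have "\<dots> \<le> 20" using t10 sn by (simp add: field_simps)
    finally show ?thesis .
  qed
  have r0: "(2 * real t / real n) \<ge> (0::real)" by simp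
  have If: "\<And>u. u \<in> S \<Longrightarrow> I u \<le> f (hamming u v)"
  proof -
    fix u assume "u \<in> S"
    then have uw: "u \<in> words q n" using S by auto
    have "I u = real (card (hball q n u t \<inter> hball q n v t))" by (simp add: I_def Int_commute)
    also have "\<dots> \<le> f (hamming u v)" unfolding f_def V_def by (rule inter_bound[OF q tn n uw vw])
    finally show "I u \<le> f (hamming u v)" .
  qed
  have hpos: "\<And>u. u \<in> S - {v} \<Longrightarrow> hamming u v \<ge> 1"
  proof -
    fix u assume u: "u \<in> S - {v}"
    then have "length u = length v" using S vw by (auto simp: words_def)
    then show "hamming u v \<ge> 1" using hamming_0[of u v] u by (cases "hamming u v") auto
  qed
  define A where "A = {u \<in> S-{v}. hamming u v \<le> 20}"
  define B where "B = {u \<in> S-{v}. \<not> hamming u v \<le> 20}"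
  have fA: "finite A" and fB: "finite B" using fS by (auto simp: A_def B_def)
  have split: "(\<Sum>u\<in>S-{v}. I u) = (\<Sum>u\<in>A. I u) + (\<Sum>u\<in>B. I u)"
  proof -
    have "S - {v} = A \<union> B" "A \<inter> B = {}" by (auto simp: A_def B_def)
    then show ?thesis using sum.union_disjoint[OF fA fB, of I] by simp
  qed
  have small: "(\<Sum>u\<in>A. I u) \<le> 20 * (\<epsilon> * real q ^ 20 * 20 ^ 20 * V)"
  proof -
    have "(\<Sum>u\<in>A. I u) \<le> (\<Sum>u\<in>A. f (hamming u v))" using If by (intro sum_mono) (auto simp: A_def)
    also have "\<dots> = (\<Sum>k\<in>{1..20}. \<Sum>u\<in>{u \<in> A. hamming u v = k}. f (hamming u v))"
      using hpos by (intro sum.group[symmetric] fA) (auto simp: A_def)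
    also have "\<dots> \<le> (\<Sum>k\<in>{1..20::nat}. \<epsilon> * real q ^ 20 * 20 ^ 20 * V)"
    proof (rule sum_mono)
      fix k :: nat assume k: "k \<in> {1..20}"
      define s where "s = (k + 1) div 2"
      have s20: "s \<le> 20" using k unfolding s_def by auto
      have "(\<Sum>u\<in>{u \<in> A. hamming u v = k}. f (hamming u v)) = real (card {u \<in> A. hamming u v = k}) * f k"
        by simp
      also have "\<dots> \<le> real (degk S k v) * f k"
      proof (rule mult_right_mono)
        have "{u \<in> A. hamming u v = k} \<subseteq> {u \<in> S. hamming u v = k}" by (auto simp: A_def)
        then show "real (card {u \<in> A. hamming u v = k}) \<le> real (degk S k v)"
          unfolding degk_def using fS by (intro of_nat_mono card_mono) auto
        show "0 \<le> f k" using V0 by (simp add: f_def)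
      qed
      also have "\<dots> \<le> (\<epsilon> * sqrt (real n) ^ s) * f k"
      proof (rule mult_right_mono)
        show "real (degk S k v) \<le> \<epsilon> * sqrt (real n) ^ s"
        proof -
          have "real (degk S k v) \<le> \<epsilon> * real n powr (real (nat \<lceil>real k / 2\<rceil>) / 2)" using hdeg k by blast
          also have "real n powr (real (nat \<lceil>real k / 2\<rceil>) / 2) = sqrt (real n) ^ s"
            unfolding ceil_half s_def using powr_half[of n] n by simp
          finally show ?thesis .
        qed
        show "0 \<le> f k" using V0 by (simp add: f_def)
      qed
      also have "\<dots> \<le> \<epsilon> * real q ^ 20 * 20 ^ 20 * V"
      proof (cases "k \<le> 2*t")
        case False then show ?thesis using eps V0 by (simp add: f_def)
      next
        case True
        have "(\<epsilon> * sqrt (real n) ^ s) * f k = \<epsilon> * real q ^ k * ((2 * real t / real n) * sqrt (real n))^s * V"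
        proof -
          have e: "sqrt (real n) ^ s * (2 * real t / real n) ^ s = ((2 * real t / real n) * sqrt (real n))^s"
            by (simp only: power_mult_distrib mult.commute)
          have "(\<epsilon> * sqrt (real n) ^ s) * f k = \<epsilon> * real q ^ k * (sqrt (real n) ^ s * (2 * real t / real n) ^ s) * V"
            using True by (simp add: f_def s_def)
          then show ?thesis using e by simp
        qed
        also have "\<dots> \<le> \<epsilon> * real q ^ 20 * 20 ^ 20 * V"
        proof -
          have a: "real q ^ k \<le> real q ^ 20" using q k by (intro power_increasing) auto
          have "((2 * real t / real n) * sqrt (real n))^s \<le> 20 ^ s" using r20 by (intro power_mono) auto
          also have "(20::real) ^ s \<le> 20 ^ 20" using s20 by (intro power_increasing) auto
          finally have b: "((2 * real t / real n) * sqrt (real n))^s \<le> 20 ^ 20" .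
          have "real q ^ k * ((2 * real t / real n) * sqrt (real n))^s \<le> real q ^ 20 * 20 ^ 20"
            using a b by (intro mult_mono) auto
          then have "\<epsilon> * (real q ^ k * ((2 * real t / real n) * sqrt (real n))^s) * V \<le> \<epsilon> * (real q ^ 20 * 20 ^ 20) * V"
            using eps V0 by (intro mult_right_mono mult_left_mono) auto
          then show ?thesis by (simp add: mult.assoc)
        qed
        finally show ?thesis .
      qed
      finally show "(\<Sum>u\<in>{u \<in> A. hamming u v = k}. f (hamming u v)) \<le> \<epsilon> * real q ^ 20 * 20 ^ 20 * V" .
    qed
    also have "\<dots> = 20 * (\<epsilon> * real q ^ 20 * 20 ^ 20 * V)" by simp
    finally show ?thesis .
  qed
  have c0: "0 \<le> c" and c1: "c \<le> 1" using cq sn by (auto simp: c_def)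
  have fBd: "\<And>d. 20 < d \<Longrightarrow> f d \<le> (if d \<le> 2*t then c ^ 11 * V else 0)"
  proof -
    fix d :: nat assume d: "20 < d"
    define s where "s = (d + 1) div 2"
    have s11: "11 \<le> s" using d by (auto simp: s_def)
    have hds: "d \<le> 2 * s" using d by (auto simp: s_def)
    show "f d \<le> (if d \<le> 2*t then c ^ 11 * V else 0)"
    proof (cases "d \<le> 2*t")
      case False then show ?thesis by (simp add: f_def)
    next
      case True
      have a: "real q ^ d \<le> (real q ^ 2) ^ s"
        unfolding power_mult[symmetric] using q hds by (intro power_increasing) auto
      have b: "(2 * real t / real n) \<le> 20 / sqrt (real n)" using r20 sn by (simp add: field_simps)
      have "real q ^ d * ((2 * real t / real n))^s \<le> (real q ^ 2) ^ s * (20 / sqrt (real n))^s"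
        using a b r0 by (intro mult_mono power_mono) auto
      also have "\<dots> = c ^ s" by (simp add: c_def power_mult_distrib power_divide mult.commute)
      also have "\<dots> \<le> c ^ 11" by (rule power_decreasing[OF s11 c0 c1]) 
      finally have "real q ^ d * ((2 * real t / real n))^s * V \<le> c ^ 11 * V" using V0 by (rule mult_right_mono)
      then show ?thesis using True by (simp add: f_def s_def)
    qed
  qed
  have large: "(\<Sum>u\<in>B. I u) \<le> \<epsilon> * V"
  proof -
    have "(\<Sum>u\<in>B. I u) \<le> (\<Sum>u\<in>B. if hamming u v \<le> 2*t then c ^ 11 * V else 0)"
    proof (rule sum_mono)
      fix u assume u: "u \<in> B"
      then have "I u \<le> f (hamming u v)" using If by (auto simp: B_def)
      also have "\<dots> \<le> (if hamming u v \<le> 2*t then c ^ 11 * V else 0)" using u fBd by (auto simp: B_def)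
      finally show "I u \<le> (if hamming u v \<le> 2*t then c ^ 11 * V else 0)" .
    qed
    also have "\<dots> = real (card {u \<in> B. hamming u v \<le> 2*t}) * (c ^ 11 * V)"
      using fB by (simp add: sum.If_cases[OF fB] Int_def conj_commute)
    also have "\<dots> \<le> real n ^ 5 * (c ^ 11 * V)"
    proof (rule mult_right_mono)
      have "{u \<in> B. hamming u v \<le> 2*t} \<subseteq> {u \<in> S. u \<noteq> v \<and> hamming u v \<le> 2 * t}" by (auto simp: B_def)
      then have "card {u \<in> B. hamming u v \<le> 2*t} \<le> Gdeg t S v" unfolding Gdeg_def using fS by (intro card_mono) auto
      also have "Gdeg t S v \<le> maxdeg t S" unfolding maxdeg_def using v fS by auto
      finally show "real (card {u \<in> B. hamming u v \<le> 2*t}) \<le> real n ^ 5" using hmax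
        by (meson of_nat_le_iff order_trans)
      show "0 \<le> c ^ 11 * V" using c0 V0 by simp
    qed
    also have "\<dots> = (real n ^ 5 * c ^ 11) * V" by simp
    also have "\<dots> \<le> \<epsilon> * V" using big V0 by (intro mult_right_mono) (auto simp: c_def)
    finally show ?thesis .
  qed
  have "(\<Sum>u\<in>S-{v}. I u) \<le> 20 * (\<epsilon> * real q ^ 20 * 20 ^ 20 * V) + \<epsilon> * V"
    using split small large by linarith
  also have "\<dots> = (20 * real q ^ 20 * 20 ^ 20 + 1) * \<epsilon> * V" by (simp add: algebra_simps)
  finally show ?thesis by (simp add: I_def V_def)
qed

theorem lemma4p3:
  fixes q :: nat
  assumes "q \<ge> 2"
  shows "\<exists>C::real. C > 0 \<and>
    (\<forall>\<epsilon>::real. 0 < \<epsilon> \<and> \<epsilon> < 1 / C \<longrightarrow>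
      (\<exists>n0::nat. \<forall>n t::nat. \<forall>S. n \<ge> n0 \<and> 0 < t \<and> real t \<le> 10 * sqrt (real n)
          \<and> S \<subseteq> words q n \<and> real (maxdeg t S) \<le> real n ^ 5 \<longrightarrow>
          real (card {v \<in> S. \<forall>k\<in>{1..20}.
                   real (degk S k v) \<le> \<epsilon> * real n powr (real (nat \<lceil>real k / 2\<rceil>) / 2)})
            \<le> (1 + C * \<epsilon>) * Hq q n t))"
proof -
  have q: "q \<ge> 2" by fact
  define C0 :: real where "C0 = 20 * real q ^ 20 * 20 ^ 20 + 1"
  have C0: "C0 > 0" unfolding C0_def by (intro add_nonneg_pos) auto
  show ?thesis
  proof (intro exI[of _ "2 * C0"] conjI allI impI)
    show "2 * C0 > 0" using C0 by simp
    fix \<epsilon> :: real assume eps: "0 < \<epsilon> \<and> \<epsilon> < 1 / (2 * C0)"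
    then have e0: "\<epsilon> > 0" and x2: "C0 * \<epsilon> < 1/2" using C0 by (auto simp: field_simps)
    define K :: real where "K = 20 * real q ^ 2"
    have "real q ^ 2 \<ge> 1" using q by (simp add: one_le_power)
    then have K1: "K \<ge> 1" by (simp add: K_def)
    define M :: real where "M = 20 + K + K ^ 11 / \<epsilon>"
    have M0: "M \<ge> 0" using K1 e0 by (simp add: M_def)
    show "\<exists>n0::nat. \<forall>n t::nat. \<forall>S. n \<ge> n0 \<and> 0 < t \<and> real t \<le> 10 * sqrt (real n)
          \<and> S \<subseteq> words q n \<and> real (maxdeg t S) \<le> real n ^ 5 \<longrightarrow>
          real (card {v \<in> S. \<forall>k\<in>{1..20}.
                   real (degk S k v) \<le> \<epsilon> * real n powr (real (nat \<lceil>real k / 2\<rceil>) / 2)})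
            \<le> (1 + 2 * C0 * \<epsilon>) * Hq q n t"
    proof (intro exI[of _ "nat \<lceil>M^2\<rceil>"] allI impI)
      fix n t :: nat and S
      assume h: "nat \<lceil>M^2\<rceil> \<le> n \<and> 0 < t \<and> real t \<le> 10 * sqrt (real n)
          \<and> S \<subseteq> words q n \<and> real (maxdeg t S) \<le> real n ^ 5"
      have S: "S \<subseteq> words q n" and t10: "real t \<le> 10 * sqrt (real n)" and hmax: "real (maxdeg t S) \<le> real n ^ 5"
        using h by auto
      have "M^2 \<le> real n" using h by linarith
      then have sM: "M \<le> sqrt (real n)" using M0 real_le_rsqrt by blast
      have s20: "20 \<le> sqrt (real n)" and sK: "K \<le> sqrt (real n)" and sK11: "K ^ 11 / \<epsilon> \<le> sqrt (real n)"
      proof -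
        have "K^11/\<epsilon> \<ge> 0" using K1 e0 by simp
        then show "20 \<le> sqrt (real n)" "K \<le> sqrt (real n)" "K ^ 11 / \<epsilon> \<le> sqrt (real n)"
          using sM K1 unfolding M_def by linarith+
      qed
      have sn: "sqrt (real n) > 0" using s20 by linarith
      then have n: "n > 0" by simp
      have nn: "real n = sqrt (real n) * sqrt (real n)" by simp
      have tn: "2 * t \<le> n"
      proof -
        have "real (2*t) \<le> 20 * sqrt (real n)" using t10 by simp
        also have "\<dots> \<le> sqrt (real n) * sqrt (real n)" using s20 sn by (intro mult_right_mono) auto
        finally show ?thesis using nn by (metis of_nat_le_iff)
      qed
      have cq: "20 * real q ^ 2 \<le> sqrt (real n)" using sK by (simp add: K_def)
      have big: "real n ^ 5 * (20 * real q ^ 2 / sqrt (real n)) ^ 11 \<le> \<epsilon>"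
      proof -
        have "real n ^ 5 = (sqrt (real n) ^ 2) ^ 5" by simp
        also have "\<dots> = sqrt (real n) ^ 10" by (simp only: power_mult[symmetric]) simp
        finally have "real n ^ 5 = sqrt (real n) ^ 10" .
        then have "real n ^ 5 * (20 * real q ^ 2 / sqrt (real n)) ^ 11 = K ^ 11 / sqrt (real n)"
        proof -
          have p11: "sqrt (real n) ^ 11 = sqrt (real n) * sqrt (real n) ^ 10" by (simp add: power_Suc[symmetric])
          show ?thesis using sn \<open>real n ^ 5 = sqrt (real n) ^ 10\<close> by (simp add: K_def power_divide field_simps p11)
        qed
        also have "\<dots> \<le> \<epsilon>" using sK11 sn e0 by (simp add: field_simps)
        finally show ?thesis .
      qed
      define S1 where "S1 = {v \<in> S. \<forall>k\<in>{1..20}.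
                   real (degk S k v) \<le> \<epsilon> * real n powr (real (nat \<lceil>real k / 2\<rceil>) / 2)}"
      define V where "V = real (Vq q n t)"
      have "(n choose 0)*(q-1)^0 \<le> Vq q n t" unfolding Vq_def by (rule member_le_sum) auto
      then have V0: "V > 0" by (simp add: V_def)
      have fS: "finite S" using S finite_words finite_subset by blast
      have S1S: "S1 \<subseteq> S" by (auto simp: S1_def)
      have S1w: "S1 \<subseteq> words q n" using S1S S by auto
      have dc: "real (card S1) * V \<le> real q ^ n + (\<Sum>v\<in>S1. \<Sum>u\<in>S1-{v}. real (card (hball q n v t \<inter> hball q n u t)))"
        unfolding V_def by (rule double_count[OF S1w])
      also have "(\<Sum>v\<in>S1. \<Sum>u\<in>S1-{v}. real (card (hball q n v t \<inter> hball q n u t))) \<le> (\<Sum>v\<in>S1. C0 * \<epsilon> * V)"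
      proof (rule sum_mono)
        fix v assume v: "v \<in> S1"
        have "(\<Sum>u\<in>S1-{v}. real (card (hball q n v t \<inter> hball q n u t))) \<le> (\<Sum>u\<in>S-{v}. real (card (hball q n v t \<inter> hball q n u t)))"
          using S1S fS by (intro sum_mono2) auto
        also have "\<dots> \<le> (20 * real q ^ 20 * 20 ^ 20 + 1) * \<epsilon> * Vq q n t"
          by (rule per_v[OF q n tn t10 S _ e0 _ hmax cq big]) (use v in \<open>auto simp: S1_def\<close>)
        finally show "(\<Sum>u\<in>S1-{v}. real (card (hball q n v t \<inter> hball q n u t))) \<le> C0 * \<epsilon> * V"
          by (simp add: C0_def V_def)
      qed
      finally have main: "real (card S1) * V \<le> real q ^ n + real (card S1) * (C0 * \<epsilon> * V)" by simp
      define x where "x = C0 * \<epsilon>"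
      have x0: "0 \<le> x" and x1: "x < 1/2" using C0 e0 x2 by (auto simp: x_def)
      have "real (card S1) * V \<le> real (card S1) * V * ((1 - x) * (1 + 2*x))"
      proof -
        have "x * x \<le> x * (1/2)" using x0 x1 by (intro mult_left_mono) auto
        then have "1 \<le> (1 - x) * (1 + 2*x)" by (simp add: algebra_simps)
        moreover have "0 \<le> real (card S1) * V" using V0 by simp
        ultimately show ?thesis using mult_left_mono[of 1 "(1 - x) * (1 + 2*x)" "real (card S1) * V"] by simp
      qed
      also have "\<dots> = (real (card S1) * V - real (card S1) * (C0 * \<epsilon> * V)) * (1 + 2*x)"
        by (simp add: x_def algebra_simps)
      also have "\<dots> \<le> real q ^ n * (1 + 2*x)"
        using main x0 by (intro mult_right_mono) auto
      finally have "real (card S1) * V \<le> real q ^ n * (1 + 2*x)" .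
      then have "real (card S1) \<le> (1 + 2*x) * (real q ^ n / V)" using V0 by (simp add: field_simps)
      then show "real (card S1) \<le> (1 + 2 * C0 * \<epsilon>) * Hq q n t"
        by (simp add: Hq_def V_def x_def mult.assoc)
    qed
  qed
qed

end
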